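(* Let $N\ge2$, $M\ge1$, $q_1,\dots,q_N>0$, and let each $J_k:\mathbb{R}^M\to\mathbb{R}$ be convex and differentiable, with $\sum_{k=1}^Nq_kJ_k$ strongly convex with unique minimizer $w^\star$, and suppose $\sum_{k=1}^NJ_k$ is strongly convex. Let $A$ be primitive, left-stochastic and balanced with Perron vector $p$, and let $\mu_1,\dots,\mu_N>0$ satisfy $q=\beta\,\mathrm{diag}\{\mu_1,\dots,\mu_N\}p$ for some $\beta>0$. Then there exists a unique pair $(\mathcal{W}^\star,\mathcal{Y}^\star_o)\in\mathbb{R}^{NM}\times\mathbb{R}^{NM}$ with $\mathcal{Y}^\star_o$ in the range of $\mathcal{V}$ such that $$\bar{\mathcal{A}}^{\mathsf T}\mathcal{M}\nabla\mathcal{J}^o(\mathcal{W}^\star)+\mathcal{P}^{-1}\mathcal{V}\mathcal{Y}^\star_o=0,\qquad \mathcal{V}\mathcal{W}^\star=0 .$$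
   Context: $A=[a_{\ell k}]\in\mathbb{R}^{N\times N}$ is nonnegative, left-stochastic ($A^{\mathsf T}\mathbf{1}_N=\mathbf{1}_N$) and primitive, with Perron vector $p$: $Ap=p$, $\mathbf{1}_N^{\mathsf T}p=1$, $p\succ0$; $P=\mathrm{diag}(p)$, balanced means $PA^{\mathsf T}=AP$. $q=(q_1,\dots,q_N)^{\mathsf T}$, $\bar A=(I_N+A)/2$. The symmetric positive semidefinite matrix $(P-AP)/2$ has eigendecomposition $U\Sigma U^{\mathsf T}$ and $V=U\Sigma^{1/2}U^{\mathsf T}$. $\bar{\mathcal{A}}=\bar A\otimes I_M$, $\mathcal{P}=P\otimes I_M$, $\mathcal{V}=V\otimes I_M$, $\mathcal{M}=\mathrm{diag}\{\mu_1I_M,\dots,\mu_NI_M\}$, and $\nabla\mathcal{J}^o(\mathcal{W})=\mathrm{col}\{\nabla J_1(w_1),\dots,\nabla J_N(w_N)\}$ for $\mathcal{W}=\mathrm{col}\{w_1,\dots,w_N\}$. *)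

theory Defs
  imports "HOL-Analysis.Analysis"
begin

text \<open>Matrix power for square matrices.\<close>
fun mpow :: "real^'n^'n \<Rightarrow> nat \<Rightarrow> real^'n^'n" where
  "mpow A 0 = mat 1"
| "mpow A (Suc k) = A ** mpow A k"

definition nonneg_matrix :: "real^'n^'n \<Rightarrow> bool" where
  "nonneg_matrix A \<longleftrightarrow> (\<forall>i j. A$i$j \<ge> 0)"

definition primitive_matrix :: "real^'n^'n \<Rightarrow> bool" where
  "primitive_matrix A \<longleftrightarrow> nonneg_matrix A \<and> (\<exists>k>0. \<forall>i j. mpow A k $i$j > 0)"

text \<open>Left-stochastic: A^T 1 = 1, i.e. every column sums to one.\<close>
definition left_stochastic :: "real^'n^'n \<Rightarrow> bool" where
  "left_stochastic A \<longleftrightarrow> nonneg_matrix A \<and> transpose A *v (\<chi> i. 1) = (\<chi> i. 1)"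

text \<open>Diagonal matrix with given diagonal.\<close>
definition mdiag :: "real^'n \<Rightarrow> real^'n^'n" where
  "mdiag d = (\<chi> i j. if i = j then d$i else 0)"

text \<open>Perron vector: A p = p, 1^T p = 1, p > 0.\<close>
definition perron_vector :: "real^'n^'n \<Rightarrow> real^'n \<Rightarrow> bool" where
  "perron_vector A p \<longleftrightarrow> A *v p = p \<and> sum (\<lambda>i. p$i) UNIV = 1 \<and> (\<forall>i. p$i > 0)"

definition balanced :: "real^'n^'n \<Rightarrow> real^'n \<Rightarrow> bool" where
  "balanced A p \<longleftrightarrow> mdiag p ** transpose A = A ** mdiag p"

text \<open>Action of the Kronecker product B \<otimes> I_M on a stacked vector
  W = col{w_1,...,w_N} (block k of W is W$k).\<close>
definition kron_act :: "real^'n^'n \<Rightarrow> (real^'m)^'n \<Rightarrow> (real^'m)^'n" where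
  "kron_act B W = (\<chi> l. \<Sum>k\<in>UNIV. B$l$k *\<^sub>R W$k)"

text \<open>Gradient of a differentiable function on R^M.\<close>
definition grad :: "(real^'m \<Rightarrow> real) \<Rightarrow> real^'m \<Rightarrow> real^'m" where
  "grad f w = (SOME g. (f has_derivative (\<lambda>h. g \<bullet> h)) (at w))"

definition strongly_convex :: "('a::real_normed_vector \<Rightarrow> real) \<Rightarrow> bool" where
  "strongly_convex f \<longleftrightarrow> (\<exists>\<nu>>0. \<forall>x y t. 0 \<le> t \<and> t \<le> 1 \<longrightarrow>
      f ((1 - t) *\<^sub>R x + t *\<^sub>R y) \<le> (1 - t) * f x + t * f y - \<nu> / 2 * t * (1 - t) * (norm (x - y))\<^sup>2)"

text \<open>V = U \<Sigma>^{1/2} U^T built from an eigendecomposition (P - AP)/2 = U \<Sigma> U^T,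
  U orthogonal, \<Sigma> diagonal with nonnegative entries.\<close>
definition eig_decomp :: "real^'n^'n \<Rightarrow> real^'n^'n \<Rightarrow> real^'n \<Rightarrow> bool" where
  "eig_decomp S U \<sigma> \<longleftrightarrow> orthogonal_matrix U \<and> (\<forall>i. \<sigma>$i \<ge> 0) \<and>
      S = U ** mdiag \<sigma> ** transpose U"

definition sqrt_from_decomp :: "real^'n^'n \<Rightarrow> real^'n \<Rightarrow> real^'n^'n" where
  "sqrt_from_decomp U \<sigma> = U ** mdiag (\<chi> i. sqrt (\<sigma>$i)) ** transpose U"

end

theory Submission
  imports Defs
begin
lemma mdiag_mult: "mdiag a ** mdiag b = mdiag (\<chi> i. a$i * b$i)"
  by (simp add: mdiag_def matrix_matrix_mult_def vec_eq_iff if_distrib[of "\<lambda>x. x * _"] cong: if_cong)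
lemma transpose_mdiag: "transpose (mdiag a) = mdiag a"
  by (simp add: mdiag_def transpose_def vec_eq_iff)
lemma mdiag_mv: "mdiag a *v x = (\<chi> i. a$i * x$i)"
  by (simp add: mdiag_def matrix_vector_mult_def vec_eq_iff if_distrib[of "\<lambda>x. x * _"] cong: if_cong)

lemma V_props:
  assumes "eig_decomp S U \<sigma>"
  shows "transpose (sqrt_from_decomp U \<sigma>) = sqrt_from_decomp U \<sigma>"
    "sqrt_from_decomp U \<sigma> ** sqrt_from_decomp U \<sigma> = S"
proof -
  have U: "transpose U ** U = mat 1" and S: "S = U ** mdiag \<sigma> ** transpose U"
    and s: "\<forall>i. \<sigma>$i \<ge> 0"
    using assms by (auto simp: eig_decomp_def orthogonal_matrix_def)
  let ?D = "mdiag (\<chi> i. sqrt (\<sigma>$i))"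
  show "transpose (sqrt_from_decomp U \<sigma>) = sqrt_from_decomp U \<sigma>"
    by (simp add: sqrt_from_decomp_def matrix_transpose_mul transpose_mdiag matrix_mul_assoc)
  have DD: "?D ** ?D = mdiag \<sigma>"
    using s by (simp add: mdiag_mult)
  have "sqrt_from_decomp U \<sigma> ** sqrt_from_decomp U \<sigma> = U ** ?D ** (transpose U ** U) ** ?D ** transpose U"
    by (simp add: sqrt_from_decomp_def matrix_mul_assoc)
  also have "\<dots> = U ** (?D ** ?D) ** transpose U" unfolding U by (simp add: matrix_mul_assoc)
  also have "\<dots> = S" using DD S by simp
  finally show "sqrt_from_decomp U \<sigma> ** sqrt_from_decomp U \<sigma> = S" .
qed

lemma ker_VS:
  fixes V S :: "real^'n^'n"
  assumes "V ** V = S" "transpose V = V"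
  shows "V *v x = 0 \<longleftrightarrow> S *v x = 0"
proof
  assume "V *v x = 0" thus "S *v x = 0" using assms
    by (metis matrix_vector_mul_assoc matrix_vector_mult_0_right)
next
  assume h: "S *v x = 0"
  have "(V *v x) \<bullet> (V *v x) = x \<bullet> (S *v x)"
    by (metis assms dot_lmul_matrix matrix_vector_mul_assoc transpose_matrix_vector)
  thus "V *v x = 0" using h by simp
qed

lemma mpow_fix: "A *v y = y \<Longrightarrow> mpow A k *v y = y"
  by (induction k) (auto simp: matrix_vector_mul_assoc[symmetric])

lemma kerS:
  fixes A :: "real^'n^'n"
  assumes prim: "primitive_matrix A" and perron: "perron_vector A p"
  shows "(mdiag p - A ** mdiag p) *v x = 0 \<longleftrightarrow> (\<exists>c. x = c *\<^sub>R (\<chi> i. 1))"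
proof
  have Ap: "A *v p = p" and ppos: "\<forall>i. p$i > 0" using perron by (auto simp: perron_vector_def)
  have Pone: "mdiag p *v (\<chi> i. 1) = p"
    by (simp add: mdiag_mv vec_eq_iff)
  show "\<exists>c. x = c *\<^sub>R (\<chi> i. 1) \<Longrightarrow> (mdiag p - A ** mdiag p) *v x = 0"
    using Ap Pone
    by (auto simp: matrix_vector_mult_diff_rdistrib matrix_vector_mul_assoc[symmetric] matrix_vector_mult_scaleR)
  assume h: "(mdiag p - A ** mdiag p) *v x = 0"
  define y where "y = mdiag p *v x"
  have Ay: "A *v y = y" using h unfolding y_def
    by (simp add: matrix_vector_mult_diff_rdistrib matrix_vector_mul_assoc[symmetric])
  obtain k where kpos: "\<forall>i j. mpow A k $i$j > 0" using prim by (auto simp: primitive_matrix_def)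
  define B where "B = mpow A k"
  define c where "c = Min ((\<lambda>i. y$i / p$i) ` UNIV)"
  have "c \<in> (\<lambda>i. y$i / p$i) ` UNIV"
    unfolding c_def by (rule Min_in) auto
  then obtain i0 where i0: "c = y$i0 / p$i0" by auto
  define z where "z = y - c *\<^sub>R p"
  have zge: "z$i \<ge> 0" for i
  proof -
    have "c \<le> y$i / p$i" unfolding c_def by (rule Min_le) auto
    hence "c * p$i \<le> y$i" using ppos by (simp add: pos_le_divide_eq)
    thus ?thesis by (simp add: z_def)
  qed
  have z0: "z$i0 = 0" using i0 ppos[rule_format, of i0] by (simp add: z_def)
  have Bz: "B *v z = z" unfolding B_def z_def
    using mpow_fix[OF Ay, of k] mpow_fix[OF Ap, of k]
    by (simp add: matrix_vector_mult_diff_distrib matrix_vector_mult_scaleR)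
  have "(\<Sum>j\<in>UNIV. B$i0$j * z$j) = (B *v z)$i0" by (simp add: matrix_vector_mult_def)
  hence "(\<Sum>j\<in>UNIV. B$i0$j * z$j) = 0" using Bz z0 by simp
  hence "\<forall>j\<in>UNIV. B$i0$j * z$j = 0"
    using zge kpos unfolding B_def by (subst (asm) sum_nonneg_eq_0_iff) (auto simp: less_imp_le)
  hence "z$j = 0" for j
  proof -
    have "mpow A k $i0$j * z$j = 0" using \<open>\<forall>j\<in>UNIV. B$i0$j * z$j = 0\<close> unfolding B_def by blast
    thus ?thesis using kpos[rule_format, of i0 j] by simp
  qed
  hence "y$j = c * p$j" for j by (simp add: z_def)
  hence "p$j * x$j = c * p$j" for j unfolding y_def by (simp add: mdiag_mv)
  hence "x$j = c" for j using ppos[rule_format, of j] by (metis less_irrefl mult.commute mult_left_cancel)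
  thus "\<exists>c. x = c *\<^sub>R (\<chi> i. 1)" by (auto simp: vec_eq_iff)
qed
lemma rangeS:
  fixes S :: "real^'n^'n"
  assumes sym: "transpose S = S" and ker: "\<And>x. S *v x = 0 \<longleftrightarrow> (\<exists>c. x = c *\<^sub>R (\<chi> i. 1))"
    and z: "(\<chi> i. 1) \<bullet> z = 0"
  shows "\<exists>t. S *v t = z"
proof -
  define one :: "real^'n" where "one = (\<chi> i. 1)"
  define H where "H = {x. one \<bullet> x = 0}"
  have subH: "subspace H" unfolding H_def by (rule subspace_hyperplane)
  have lin: "linear ((*v) S)" by (rule matrix_vector_mul_linear)
  have S1: "S *v one = 0" using ker[of one] unfolding one_def by (metis scaleR_one)
  have oo: "one \<bullet> one \<noteq> 0" unfolding one_def by (simp add: inner_vec_def)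
  have inj: "inj_on ((*v) S) (span H)"
    unfolding span_eq_iff[THEN iffD2, OF subH]
  proof (rule inj_onI)
    fix x y assume "x \<in> H" "y \<in> H" "S *v x = S *v y"
    hence "S *v (x - y) = 0" by (simp add: matrix_vector_mult_diff_distrib)
    then obtain c where c: "x - y = c *\<^sub>R one" using ker unfolding one_def by blast
    have "one \<bullet> (x - y) = 0" using \<open>x \<in> H\<close> \<open>y \<in> H\<close> unfolding H_def by (simp add: inner_diff_right)
    hence "c * (one \<bullet> one) = 0" using c by simp
    hence "c = 0" using oo by simp
    thus "x = y" using c by simp
  qed
  have dimeq: "dim ((*v) S ` H) = dim H" by (rule eucl.dim_image_eq[OF lin inj])
  have sub: "(*v) S ` H \<subseteq> H"
  proof
    fix w assume "w \<in> (*v) S ` H"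
    then obtain t where "w = S *v t" by blast
    have "one \<bullet> (S *v t) = (one v* S) \<bullet> t" by (simp add: dot_lmul_matrix)
    also have "one v* S = 0" using sym S1 by (metis transpose_matrix_vector)
    finally show "w \<in> H" unfolding H_def using \<open>w = S *v t\<close> by simp
  qed
  have subI: "subspace ((*v) S ` H)" by (rule linear_subspace_image[OF lin subH])
  have "(*v) S ` H = H" by (rule subspace_dim_equal[OF subI subH sub]) (simp add: dimeq)
  moreover have "z \<in> H" using z unfolding H_def one_def by simp
  ultimately show ?thesis by (metis imageE)
qed
lemma grad_deriv:
  fixes f :: "real^'m \<Rightarrow> real"
  assumes "f differentiable (at w)"
  shows "(f has_derivative (\<lambda>h. grad f w \<bullet> h)) (at w)"
proof -
  obtain D where D: "(f has_derivative D) (at w)" using assms by (auto simp: differentiable_def)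
  have lin: "linear D" using D by (rule has_derivative_linear)
  define g where "g = (\<chi> i. D (axis i 1))"
  have "D h = g \<bullet> h" for h
  proof -
    have e: "(\<Sum>i\<in>UNIV. h$i *\<^sub>R axis i (1::real)) = h"
      by (simp add: vec_eq_iff axis_def if_distrib cong: if_cong)
    have "D h = D (\<Sum>i\<in>UNIV. h$i *\<^sub>R axis i (1::real))"
      by (simp only: e)
    also have "\<dots> = (\<Sum>i\<in>UNIV. h$i * D (axis i 1))"
      using lin by (simp add: linear_sum linear_scale)
    also have "\<dots> = g \<bullet> h" unfolding g_def by (simp add: inner_vec_def mult.commute)
    finally show ?thesis .
  qed
  hence eqD: "D = (\<lambda>h. g \<bullet> h)" by (intro ext)
  have ex: "\<exists>g. (f has_derivative (\<lambda>h. g \<bullet> h)) (at w)" using D unfolding eqD by blast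
  show ?thesis unfolding grad_def by (rule someI_ex[OF ex])
qed

lemma fermat_grad:
  fixes F :: "real^'m \<Rightarrow> real"
  assumes "(F has_derivative (\<lambda>h. G \<bullet> h)) (at w)" "\<forall>x. F w \<le> F x"
  shows "G = 0"
proof -
  have "(\<lambda>h. G \<bullet> h) = (\<lambda>v. 0)"
    by (rule differential_zero_maxmin[of w UNIV]) (use assms in auto)
  hence "G \<bullet> G = 0" by metis
  thus ?thesis by simp
qed

lemma convex_min:
  fixes F :: "real^'m \<Rightarrow> real"
  assumes cvx: "convex_on UNIV F" and der: "(F has_derivative (\<lambda>h. 0)) (at w)"
  shows "F w \<le> F x"
proof -
  define \<phi> where "\<phi> = (\<lambda>t::real. F (w + t *\<^sub>R (x - w)))"
  have c\<phi>: "convex_on UNIV \<phi>"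
  proof (rule convex_onI)
    fix t a b :: real assume t: "0 < t" "t < 1"
    have "\<phi> ((1 - t) *\<^sub>R a + t *\<^sub>R b) = F ((1 - t) *\<^sub>R (w + a *\<^sub>R (x - w)) + t *\<^sub>R (w + b *\<^sub>R (x - w)))"
    proof -
      have "(1 - t) *\<^sub>R (w + a *\<^sub>R (x - w)) + t *\<^sub>R (w + b *\<^sub>R (x - w)) = w + ((1-t)*a + t*b) *\<^sub>R (x - w)"
        by (simp add: algebra_simps)
      thus ?thesis unfolding \<phi>_def by simp
    qed
    also have "\<dots> \<le> (1 - t) * \<phi> a + t * \<phi> b"
      unfolding \<phi>_def using t by (intro convex_onD[OF cvx]) auto
    finally show "\<phi> ((1 - t) *\<^sub>R a + t *\<^sub>R b) \<le> (1 - t) * \<phi> a + t * \<phi> b" .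
  qed auto
  have d1: "((\<lambda>t::real. w + t *\<^sub>R (x - w)) has_derivative (\<lambda>t. t *\<^sub>R (x - w))) (at 0)"
    by (auto intro!: derivative_eq_intros)
  have der0: "(F has_derivative (\<lambda>h. 0)) (at ((\<lambda>t::real. w + t *\<^sub>R (x - w)) 0))"
    using der by simp
  have "(\<phi> has_derivative (\<lambda>t. 0)) (at 0)"
    using has_derivative_compose[OF d1 der0] unfolding \<phi>_def comp_def by simp
  moreover have "(\<lambda>t::real. 0::real) = (*) 0" by auto
  ultimately have "(\<phi> has_field_derivative 0) (at 0)" by (simp add: has_field_derivative_def)
  hence "\<phi> 1 - \<phi> 0 \<ge> 0 * (1 - 0)"
    by (intro convex_on_imp_above_tangent[OF c\<phi>]) auto
  thus ?thesis unfolding \<phi>_def by simp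
qed
lemma convex_on_sum_fun:
  assumes "finite I" "\<And>i. i \<in> I \<Longrightarrow> convex_on UNIV (f i)"
  shows "convex_on UNIV (\<lambda>x. \<Sum>i\<in>I. f i x)"
  using assms
proof (induction I rule: finite_induct)
  case empty thus ?case by (simp add: convex_on_const)
next
  case (insert a I) thus ?case by (simp add: convex_on_add)
qed

definition colv :: "(real^'m)^'n \<Rightarrow> 'm \<Rightarrow> real^'n" where
  "colv W j = (\<chi> k. W$k$j)"

lemma colv_kron: "colv (kron_act B W) j = B *v colv W j"
  by (simp add: colv_def kron_act_def matrix_vector_mult_def vec_eq_iff sum_component)

lemma colv_add: "colv (W + W') j = colv W j + colv W' j"
  by (simp add: colv_def vec_eq_iff)

lemma colv_zero: "colv 0 j = 0"
  by (simp add: colv_def vec_eq_iff)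

lemma colv_eq: "W = W' \<longleftrightarrow> (\<forall>j. colv W j = colv W' j)"
  by (auto simp: colv_def vec_eq_iff)

lemma colv_make: "colv (\<chi> k. \<chi> j. t j $ k) j = t j"
  by (simp add: colv_def vec_eq_iff)

lemma kron_comp: "kron_act B (kron_act C W) = kron_act (B ** C) W"
  by (simp add: colv_eq colv_kron matrix_vector_mul_assoc)
theorem lemma3:
  fixes A :: "real^'n^'n" and p :: "real^'n"
    and J :: "'n \<Rightarrow> real^'m \<Rightarrow> real"
    and q \<mu> :: "real^'n" and \<beta> :: real
    and U :: "real^'n^'n" and \<sigma> :: "real^'n"
  assumes N2: "CARD('n) \<ge> 2"
    and q_pos: "\<forall>k. q$k > 0"
    and J_convex: "\<forall>k. convex_on UNIV (J k)"
    and J_diff: "\<forall>k w. J k differentiable (at w)"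
    and qJ_sc: "strongly_convex (\<lambda>w. \<Sum>k\<in>UNIV. q$k * J k w)"
    and qJ_min: "\<exists>!wstar. \<forall>w. (\<Sum>k\<in>UNIV. q$k * J k wstar) \<le> (\<Sum>k\<in>UNIV. q$k * J k w)"
    and J_sc: "strongly_convex (\<lambda>w. \<Sum>k\<in>UNIV. J k w)"
    and A_prim: "primitive_matrix A"
    and A_ls: "left_stochastic A"
    and p_perron: "perron_vector A p"
    and A_bal: "balanced A p"
    and mu_pos: "\<forall>k. \<mu>$k > 0"
    and beta_pos: "\<beta> > 0"
    and q_def: "q = \<beta> *\<^sub>R (mdiag \<mu> *v p)"
    and decomp: "eig_decomp ((1/2) *\<^sub>R (mdiag p - A ** mdiag p)) U \<sigma>"
  shows "\<exists>!(W, Y). Y \<in> range (kron_act (sqrt_from_decomp U \<sigma>)) \<and>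
     kron_act (transpose ((1/2) *\<^sub>R (mat 1 + A)))
        (\<chi> k. \<mu>$k *\<^sub>R grad (J k) (W$k))
     + kron_act (matrix_inv (mdiag p)) (kron_act (sqrt_from_decomp U \<sigma>) Y) = 0 \<and>
     kron_act (sqrt_from_decomp U \<sigma>) W = (0 :: (real^'m)^'n)"
proof -
  define V where "V = sqrt_from_decomp U \<sigma>"
  define S where "S = (1/2) *\<^sub>R (mdiag p - A ** mdiag p)"
  define one :: "real^'n" where "one = (\<chi> i. 1)"
  define Ab where "Ab = (1/2) *\<^sub>R (mat 1 + A)"
  define Pi where "Pi = matrix_inv (mdiag p)"
  define Pd where "Pd = mdiag (\<chi> i. 1 / p$i)"
  define F where "F = (\<lambda>w. \<Sum>k\<in>UNIV. q$k * J k w)"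
  define gr where "gr = (\<lambda>k w. grad (J k) w)"
  define G where "G = (\<lambda>W::(real^'m)^'n. \<chi> k. \<mu>$k *\<^sub>R gr k (W$k))"
  define Gs where "Gs = (\<lambda>w. \<Sum>k\<in>UNIV. q$k *\<^sub>R gr k w)"
  have Ap: "A *v p = p" and ppos: "\<forall>i. p$i > 0" using p_perron by (auto simp: perron_vector_def)
  have VT: "transpose V = V" and VV: "V ** V = S"
    using V_props[OF decomp] unfolding V_def S_def by auto
  have ST: "transpose S = S" using VT VV by (metis matrix_transpose_mul)
  have kerS: "S *v x = 0 \<longleftrightarrow> (\<exists>c. x = c *\<^sub>R one)" for x
  proof -
    have "S *v x = (1/2) *\<^sub>R ((mdiag p - A ** mdiag p) *v x)"
      unfolding S_def by (simp add: scaleR_matrix_vector_assoc)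
    thus ?thesis using kerS[OF A_prim p_perron, of x] unfolding one_def by simp
  qed
  have kerV: "V *v x = 0 \<longleftrightarrow> (\<exists>c. x = c *\<^sub>R one)" for x
    using ker_VS[OF VV VT] kerS by simp
  have V1: "V *v one = 0" using kerV[of one] by (metis scaleR_one)
  have rng: "one \<bullet> z = 0 \<Longrightarrow> \<exists>t. S *v t = z" for z
    using rangeS[OF ST, of z] kerS unfolding one_def by blast
  (* inverse of P *)
  have md1: "mdiag (\<chi> i. 1) = (mat 1 :: real^'n^'n)" by (simp add: mdiag_def mat_def vec_eq_iff)
  have pinv1: "(\<chi> i. p$i * (1/p$i)) = (\<chi> i. 1)" "(\<chi> i. (1/p$i) * p$i) = (\<chi> i. 1)"
    using ppos by (auto simp: vec_eq_iff less_imp_neq[symmetric])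
  have PPd: "mdiag p ** Pd = mat 1" "Pd ** mdiag p = mat 1"
    unfolding Pd_def mdiag_mult using pinv1 md1 by simp_all
  have "\<exists>B. mdiag p ** B = mat 1 \<and> B ** mdiag p = mat 1" using PPd by blast
  hence PPi: "mdiag p ** Pi = mat 1 \<and> Pi ** mdiag p = mat 1"
    unfolding Pi_def matrix_inv_def by (rule someI_ex)
  have PiPd: "Pi = Pd"
  proof -
    have "Pi = Pi ** (mdiag p ** Pd)" using PPd by simp
    also have "\<dots> = (Pi ** mdiag p) ** Pd" by (simp add: matrix_mul_assoc)
    also have "\<dots> = Pd" using PPi by simp
    finally show ?thesis .
  qed
  (* key inner product identities *)
  have Abp: "Ab *v p = p"
    unfolding Ab_def using Ap
    by (simp add: scaleR_matrix_vector_assoc[symmetric] matrix_vector_mult_add_rdistrib scaleR_2 flip: scaleR_add_right)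
  have K1: "p \<bullet> (transpose Ab *v g) = p \<bullet> g" for g
  proof -
    have "p \<bullet> (transpose Ab *v g) = (g v* Ab) \<bullet> p" by (simp add: inner_commute)
    also have "\<dots> = g \<bullet> (Ab *v p)" by (rule dot_lmul_matrix)
    finally show ?thesis using Abp by (simp add: inner_commute)
  qed
  have K1': "p \<bullet> (g v* Ab) = p \<bullet> g" for g using K1[of g] by simp
  have K2: "p \<bullet> (Pd *v v) = one \<bullet> v" for v
    using ppos unfolding Pd_def one_def by (simp add: mdiag_mv inner_vec_def less_imp_neq[symmetric])
  have K3: "one \<bullet> (V *v y) = 0" for y
  proof -
    have "one \<bullet> (V *v y) = (one v* V) \<bullet> y" by (simp add: dot_lmul_matrix)
    also have "one v* V = 0" using VT V1 by (metis transpose_matrix_vector)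
    finally show ?thesis by simp
  qed
  have K4: "one \<bullet> (mdiag p *v v) = p \<bullet> v" for v
    unfolding one_def by (simp add: mdiag_mv inner_vec_def)
  (* gradients *)
  have dJ: "(J k has_derivative (\<lambda>h. gr k w \<bullet> h)) (at w)" for k w
    unfolding gr_def using J_diff by (simp add: grad_deriv)
  have dF: "(F has_derivative (\<lambda>h. Gs w \<bullet> h)) (at w)" for w
  proof -
    have "(F has_derivative (\<lambda>h. \<Sum>k\<in>UNIV. q$k * (gr k w \<bullet> h))) (at w)"
      unfolding F_def by (intro has_derivative_sum has_derivative_mult_right dJ)
    moreover have "(\<lambda>h. \<Sum>k\<in>UNIV. q$k * (gr k w \<bullet> h)) = (\<lambda>h. Gs w \<bullet> h)"
      unfolding Gs_def by (simp add: inner_sum_left)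
    ultimately show ?thesis by simp
  qed
  have Fcvx: "convex_on UNIV F"
    unfolding F_def using J_convex q_pos
    by (intro convex_on_sum_fun convex_on_cmul) (auto simp: less_imp_le)
  obtain wstar where wmin: "\<forall>w. F wstar \<le> F w" and wuniq: "\<And>w'. \<forall>w. F w' \<le> F w \<Longrightarrow> w' = wstar"
  proof -
    have qJ': "\<exists>!ws. \<forall>w. F ws \<le> F w" using qJ_min unfolding F_def by simp
    then obtain ws where "\<forall>w. F ws \<le> F w" "\<forall>y. (\<forall>w. F y \<le> F w) \<longrightarrow> y = ws"
      by (elim ex1E) blast
    thus ?thesis using that by blast
  qed
  have Gs0: "Gs wstar = 0" using fermat_grad[OF dF wmin] .
  have Gs_min: "Gs w = 0 \<Longrightarrow> w = wstar" for w
  proof -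
    assume "Gs w = 0"
    hence "(F has_derivative (\<lambda>h. 0)) (at w)" using dF[of w] by simp
    hence "\<forall>x. F w \<le> F x" using convex_min[OF Fcvx] by blast
    thus ?thesis by (rule wuniq)
  qed
  have qk: "q$k = \<beta> * (\<mu>$k * p$k)" for k using q_def by (simp add: mdiag_mv)
  have pG: "p \<bullet> colv (G (\<chi> k. w)) j = (Gs w)$j / \<beta>" for w j
    using beta_pos unfolding G_def Gs_def colv_def
    by (simp add: inner_vec_def qk sum_component sum_divide_distrib algebra_simps)
  (* column form of equation 1 *)
  define E1 where "E1 = (\<lambda>W Y. kron_act (transpose Ab) (G W) + kron_act Pi (kron_act V Y) = (0::(real^'m)^'n))"
  have E1col: "E1 W Y \<longleftrightarrow> (\<forall>j. transpose Ab *v colv (G W) j + Pd *v (V *v colv Y j) = 0)" for W Y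
    unfolding E1_def PiPd by (simp add: colv_eq colv_add colv_kron colv_zero)
  have E2col: "kron_act V W = 0 \<longleftrightarrow> (\<forall>j. V *v colv W j = 0)" for W :: "(real^'m)^'n"
    by (simp add: colv_eq colv_kron colv_zero)
  define W0 :: "(real^'m)^'n" where "W0 = (\<chi> k. wstar)"
  have E2W0: "kron_act V W0 = 0"
  proof -
    have "colv W0 j = wstar$j *\<^sub>R one" for j unfolding W0_def colv_def one_def by (simp add: vec_eq_iff)
    thus ?thesis using kerV E2col by blast
  qed
  (* step A *)
  have stepA: "W = W0" if e1: "E1 W Y" and e2: "kron_act V W = 0" for W Y
  proof -
    fix a :: 'n
    have cW: "\<exists>c. colv W j = c *\<^sub>R one" for j using e2 E2col kerV by blast
    have Wc: "W = (\<chi> k. W$a)"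
    proof -
      have "W$k$j = W$a$j" for k j
      proof -
        obtain c where "colv W j = c *\<^sub>R one" using cW by blast
        hence "\<forall>i. W$i$j = c" unfolding colv_def one_def by (simp add: vec_eq_iff)
        thus ?thesis by simp
      qed
      thus ?thesis by (simp add: vec_eq_iff)
    qed
    have "(Gs (W$a))$j = 0" for j
    proof -
      have "transpose Ab *v colv (G W) j + Pd *v (V *v colv Y j) = 0" using e1 E1col by blast
      hence "p \<bullet> (transpose Ab *v colv (G W) j + Pd *v (V *v colv Y j)) = 0" by simp
      hence "p \<bullet> colv (G W) j = 0" by (simp add: inner_add_right K1 K1' K2 K3)
      hence "(Gs (W$a))$j / \<beta> = 0" using pG[of "W$a" j] Wc by metis
      thus ?thesis using beta_pos by simp
    qed
    hence "Gs (W$a) = 0" by (simp add: vec_eq_iff)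
    hence "W$a = wstar" by (rule Gs_min)
    thus ?thesis using Wc unfolding W0_def by simp
  qed
  (* step B *)
  have stepB: "Y = Y'" if r1: "Y \<in> range (kron_act V)" and r2: "Y' \<in> range (kron_act V)" and e1: "E1 W0 Y" and e1': "E1 W0 Y'" for Y Y'
  proof -
    obtain T T' where T: "Y = kron_act V T" "Y' = kron_act V T'" using r1 r2 by blast
    have "colv Y j = colv Y' j" for j
    proof -
      have "Pd *v (V *v colv Y j) = Pd *v (V *v colv Y' j)"
        using e1 e1' E1col by (metis add_left_cancel)
      hence "mdiag p *v (Pd *v (V *v colv Y j)) = mdiag p *v (Pd *v (V *v colv Y' j))" by simp
      moreover have "mdiag p *v (Pd *v x) = x" for x
        by (simp only: matrix_vector_mul_assoc PPd matrix_vector_mul_lid)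
      ultimately have eqV: "V *v colv Y j = V *v colv Y' j" by simp
      define d where "d = colv T j - colv T' j"
      have dY: "colv Y j - colv Y' j = V *v d"
        unfolding d_def T by (simp add: colv_kron matrix_vector_mult_diff_distrib)
      have "V *v (V *v d) = 0" using eqV dY by (metis matrix_vector_mult_diff_distrib right_minus_eq)
      hence "S *v d = 0" using VV by (simp add: matrix_vector_mul_assoc)
      hence "V *v d = 0" using ker_VS[OF VV VT] by blast
      thus ?thesis using dY by simp
    qed
    thus ?thesis by (simp add: colv_eq)
  qed
  (* step C: existence *)
  have "\<forall>j. \<exists>t. S *v t = - (mdiag p *v (transpose Ab *v colv (G W0) j))"
  proof
    fix j
    have "one \<bullet> (- (mdiag p *v (transpose Ab *v colv (G W0) j))) = - (p \<bullet> colv (G W0) j)"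
      by (simp add: K4 K1 K1')
    also have "\<dots> = 0" using pG[of wstar j] Gs0 unfolding W0_def by simp
    finally show "\<exists>t. S *v t = - (mdiag p *v (transpose Ab *v colv (G W0) j))" by (rule rng)
  qed
  then obtain t where t: "\<And>j. S *v t j = - (mdiag p *v (transpose Ab *v colv (G W0) j))" by metis
  define Y0 where "Y0 = kron_act V (\<chi> k. \<chi> j. t j $ k)"
  have Y0r: "Y0 \<in> range (kron_act V)" unfolding Y0_def by blast
  have E1Y0: "E1 W0 Y0"
    unfolding E1col
  proof
    fix j
    have "V *v colv Y0 j = S *v t j" unfolding Y0_def
      by (simp add: colv_kron colv_make matrix_vector_mul_assoc VV)
    hence "Pd *v (V *v colv Y0 j) = - (transpose Ab *v colv (G W0) j)"
    proof -
      have "Pd *v (mdiag p *v x) = x" for x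
        by (simp only: matrix_vector_mul_assoc PPd matrix_vector_mul_lid)
      thus ?thesis using \<open>V *v colv Y0 j = S *v t j\<close> t[of j] by (simp add: vec.neg)
    qed
    thus "transpose Ab *v colv (G W0) j + Pd *v (V *v colv Y0 j) = 0" by simp
  qed
  show ?thesis
  proof (rule ex1I[of _ "(W0, Y0)"])
    show "case (W0, Y0) of (W, Y) \<Rightarrow> Y \<in> range (kron_act (sqrt_from_decomp U \<sigma>)) \<and>
     kron_act (transpose ((1/2) *\<^sub>R (mat 1 + A))) (\<chi> k. \<mu>$k *\<^sub>R grad (J k) (W$k))
     + kron_act (matrix_inv (mdiag p)) (kron_act (sqrt_from_decomp U \<sigma>) Y) = 0 \<and>
     kron_act (sqrt_from_decomp U \<sigma>) W = (0 :: (real^'m)^'n)"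
      using Y0r E1Y0 E2W0 unfolding E1_def V_def Ab_def Pi_def G_def gr_def by simp
  next
    fix x assume "case x of (W, Y) \<Rightarrow> Y \<in> range (kron_act (sqrt_from_decomp U \<sigma>)) \<and>
     kron_act (transpose ((1/2) *\<^sub>R (mat 1 + A))) (\<chi> k. \<mu>$k *\<^sub>R grad (J k) (W$k))
     + kron_act (matrix_inv (mdiag p)) (kron_act (sqrt_from_decomp U \<sigma>) Y) = 0 \<and>
     kron_act (sqrt_from_decomp U \<sigma>) W = (0 :: (real^'m)^'n)"
    then obtain W Y where x: "x = (W, Y)" and r: "Y \<in> range (kron_act V)" and e1: "E1 W Y" and e2: "kron_act V W = 0"
      unfolding E1_def V_def Ab_def Pi_def G_def gr_def by (cases x) auto
    have "W = W0" by (rule stepA[OF e1 e2])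
    moreover have "Y = Y0" using stepB[OF r Y0r] e1 E1Y0 \<open>W = W0\<close> by simp
    ultimately show "x = (W0, Y0)" using x by simp
  qed
qed
end
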